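(* Let $k\ge1$. For all $\ell$ with $k<\ell\le n+1$ and all $r\in\{0,1,\dots,k\}$, $$\mathbb{E}[v(\mathrm{ALG}^{\ge\ell}_r)]\ \ge\ \sum_{j=\ell}^{n}\frac{a_{\ell,j-1}}{j}\,\mathbb{E}[v(\mathcal{A}(U^{\le j}))]\sum_{r'=0}^{r-1}\ \sum_{\substack{M\subseteq\{\ell,\dots,j-1\}\\|M|=r'}}\ \prod_{i\in M}\frac{k-1}{i},$$ where $a_{\ell,j-1}=\prod_{i=\ell}^{j-1}\left(1-\frac{k}{i}\right)$ (an empty product equals $1$).
   Context: Let $U$ be a finite ground set of $n$ items and $k\ge1$ an integer. Let $v\colon 2^U\to\mathbb{R}_{\ge0}$ be monotone and submodular. The items arrive one per round (rounds $1,\dots,n$) in a uniformly random order; $U^{\le \ell}$ denotes the set of items arriving in rounds $1,\dots,\ell$. $\mathcal{A}$ is an offline algorithm that, for every $L\subseteq U$, returns a set $\mathcal{A}(L)\subseteq L$ with $|\mathcal{A}(L)|\le k$, depending only on the set $L$ (e.g. an $\alpha$-approximation for $\max\{v(T):T\subseteq L,|T|\le k\}$). Random sets $\mathrm{ALG}^{\ge\ell}_r\subseteq U$ for $\ell\in\{1,\dots,n+1\}$, $r\in\{0,\dots,k\}$ are defined recursively: $\mathrm{ALG}^{\ge\ell}_0=\emptyset$ for all $\ell$, $\mathrm{ALG}^{\ge n+1}_r=\emptyset$ for all $r$, and for $\ell\in[n]$, $r\ge1$, letting $j$ be the item arriving in round $\ell$: $\mathrm{ALG}^{\ge\ell}_r=\{j\}\cup\mathrm{ALG}^{\ge\ell+1}_{r-1}$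 if $j\in\mathcal{A}(U^{\le\ell})$, and $\mathrm{ALG}^{\ge\ell}_r=\mathrm{ALG}^{\ge\ell+1}_{r}$ otherwise. *)

theory Defs
  imports Complex_Main "HOL-Combinatorics.Multiset_Permutations"
begin

text \<open>An arrival order of the ground set U is a list xs enumerating U without
repetition; the item arriving in round l (1-based) is xs ! (l-1), and the set of
items arriving in rounds 1..l is set (take l xs). A uniformly random order is the
uniform distribution over permutations_of_set U.\<close>

definition expect_order :: "'a set \<Rightarrow> ('a list \<Rightarrow> real) \<Rightarrow> real" where
  "expect_order U f =
     (\<Sum>xs\<in>permutations_of_set U. f xs) / real (card (permutations_of_set U))"

definition prefix_set :: "'a list \<Rightarrow> nat \<Rightarrow> 'a set" where
  "prefix_set xs l = set (take l xs)"

definition monotone_set_fun :: "'a set \<Rightarrow> ('a set \<Rightarrow> real) \<Rightarrow> bool" where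
  "monotone_set_fun U v \<longleftrightarrow> (\<forall>S T. S \<subseteq> T \<and> T \<subseteq> U \<longrightarrow> v S \<le> v T)"

definition submodular_set_fun :: "'a set \<Rightarrow> ('a set \<Rightarrow> real) \<Rightarrow> bool" where
  "submodular_set_fun U v \<longleftrightarrow>
     (\<forall>S T. S \<subseteq> U \<and> T \<subseteq> U \<longrightarrow> v (S \<union> T) + v (S \<inter> T) \<le> v S + v T)"

function alg_set :: "('a set \<Rightarrow> 'a set) \<Rightarrow> 'a list \<Rightarrow> nat \<Rightarrow> nat \<Rightarrow> 'a set" where
  "alg_set A xs l 0 = {}"
| "alg_set A xs l (Suc r) =
     (if 1 \<le> l \<and> l \<le> length xs then
        (if xs ! (l - 1) \<in> A (prefix_set xs l)
         then insert (xs ! (l - 1)) (alg_set A xs (l + 1) r)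
         else alg_set A xs (l + 1) (Suc r))
      else {})"
  by pat_completeness auto
termination
  by (relation "measure (\<lambda>(A, xs, l, r). length xs + 1 - l)") auto

end

theory Submission
  imports Defs
begin


declare alg_set.simps(2)[simp del]

lemma alg_subset: "alg_set A xs l r \<subseteq> set xs"
proof (induction A xs l r rule: alg_set.induct)
  case (1 A xs l)
  then show ?case by simp
next
  case (2 A xs l r)
  show ?case unfolding alg_set.simps(2)[of A xs l r]
    using 2 by (auto intro: nth_mem)
qed

lemma alg_mono: "alg_set A xs l r \<subseteq> alg_set A xs l (Suc r)"
proof (induction A xs l r rule: alg_set.induct)
  case (1 A xs l)
  then show ?case by simp
next
  case (2 A xs l r)
  show ?case unfolding alg_set.simps(2)[of A xs l r] alg_set.simps(2)[of A xs l "Suc r"]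
    using 2 by auto
qed

lemma alg_local:
  assumes "length xs = length ys"
    and "\<forall>m. l \<le> m \<longrightarrow> m \<le> length xs \<longrightarrow> prefix_set xs m = prefix_set ys m"
    and "\<forall>p. l \<le> p + 1 \<longrightarrow> p < length xs \<longrightarrow> xs ! p = ys ! p"
  shows "alg_set A xs l r = alg_set A ys l r"
  using assms
proof (induction A xs l r rule: alg_set.induct)
  case (1 A xs l)
  then show ?case by simp
next
  case (2 A xs l r)
  show ?case
  proof (cases "1 \<le> l \<and> l \<le> length xs")
    case True
    have e1: "xs ! (l-1) = ys ! (l-1)" using 2(3-5) True by auto
    have e2: "prefix_set xs l = prefix_set ys l" using 2(3-5) True by auto
    have h3: "\<forall>m. l+1 \<le> m \<longrightarrow> m \<le> length xs \<longrightarrow> prefix_set xs m = prefix_set ys m"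
      using 2(4) by auto
    have h4: "\<forall>p. l+1 \<le> p + 1 \<longrightarrow> p < length xs \<longrightarrow> xs ! p = ys ! p" using 2(5) by auto
    have i1: "alg_set A xs (l+1) r = alg_set A ys (l+1) r" if "xs ! (l-1) \<in> A (prefix_set xs l)"
      using 2(1)[OF True that 2(3) h3 h4] .
    have i2: "alg_set A xs (l+1) (Suc r) = alg_set A ys (l+1) (Suc r)" if "xs ! (l-1) \<notin> A (prefix_set xs l)"
      using 2(2)[OF True that 2(3) h3 h4] .
    show ?thesis unfolding alg_set.simps(2)[of A xs l r] alg_set.simps(2)[of A ys l r]
      using True e1 e2 i1 i2 2(3) by auto
  next
    case False
    then show ?thesis unfolding alg_set.simps(2)[of A xs l r] alg_set.simps(2)[of A ys l r]
      using 2(3) by auto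
  qed
qed

definition swp :: "nat \<Rightarrow> nat \<Rightarrow> 'a list \<Rightarrow> 'a list" where
  "swp i j xs = xs[i := xs!j, j := xs!i]"

lemma swp_length[simp]: "length (swp i j xs) = length xs"
  by (simp add: swp_def)

lemma swp_nth: "i < length xs \<Longrightarrow> j < length xs \<Longrightarrow> p < length xs \<Longrightarrow>
  swp i j xs ! p = (if p = j then xs ! i else if p = i then xs ! j else xs ! p)"
  by (auto simp: swp_def nth_list_update)

lemma swp_invol: "i < length xs \<Longrightarrow> j < length xs \<Longrightarrow> swp i j (swp i j xs) = xs"
  by (rule nth_equalityI) (auto simp: swp_nth)

lemma swp_perm: "i < length xs \<Longrightarrow> j < length xs \<Longrightarrow> xs \<in> permutations_of_set U \<Longrightarrow>
   swp i j xs \<in> permutations_of_set U"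
  by (auto simp: swp_def permutations_of_set_def)

lemma swp_prefix: "i < m \<Longrightarrow> j < m \<Longrightarrow> m \<le> length xs \<Longrightarrow> prefix_set (swp i j xs) m = prefix_set xs m"
proof -
  assume a: "i < m" "j < m" "m \<le> length xs"
  have "take m (swp i j xs) = (take m xs)[i := take m xs ! j, j := take m xs ! i]"
    using a by (simp add: swp_def take_update_swap)
  moreover have "set ((take m xs)[i := take m xs ! j, j := take m xs ! i]) = set (take m xs)"
    using a by (intro set_swap) auto
  ultimately show ?thesis by (simp add: prefix_set_def)
qed

lemma sum_swp:
  assumes "i < card U" "j < card U"
  shows "(\<Sum>xs\<in>permutations_of_set U. f (swp i j xs)) = (\<Sum>xs\<in>permutations_of_set U. f xs)"
  apply (rule sum.reindex_bij_witness[where i="swp i j" and j="swp i j"])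
  using assms by (auto simp: length_finite_permutations_of_set swp_invol swp_perm)



lemma submod_sum:
  assumes mono: "monotone_set_fun U v" and sub: "submodular_set_fun U v"
    and "finite B" "B \<subseteq> U" "S \<subseteq> U"
  shows "(\<Sum>x\<in>B. (v (insert x S) - v S)) \<ge> v (B \<union> S) - v S"
  using assms(3,4)
proof (induction B rule: finite_induct)
  case empty
  then show ?case by simp
next
  case (insert x B)
  have int: "insert x S \<inter> (B \<union> S) = S" using insert(2) by auto
  have un: "insert x S \<union> (B \<union> S) = insert x B \<union> S" by auto
  have "v (insert x B \<union> S) + v S \<le> v (insert x S) + v (B \<union> S)"
    using sub insert(4) assms(5) unfolding submodular_set_fun_def
    by (metis int un insert_subset le_sup_iff)
  then show ?case using insert by simp
qed

lemma submod_sum2: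
  assumes mono: "monotone_set_fun U v" and sub: "submodular_set_fun U v"
    and "finite B" "B \<subseteq> U" "S \<subseteq> U"
  shows "(\<Sum>x\<in>B. v (insert x S)) \<ge> v B + (real (card B) - 1) * v S"
proof -
  have "(\<Sum>x\<in>B. (v (insert x S) - v S)) \<ge> v (B \<union> S) - v S"
    using submod_sum[OF assms] .
  moreover have "v B \<le> v (B \<union> S)" using mono assms(4,5) unfolding monotone_set_fun_def by auto
  moreover have "(\<Sum>x\<in>B. (v (insert x S) - v S)) = (\<Sum>x\<in>B. v (insert x S)) - real (card B) * v S"
    by (simp add: sum_subtractf)
  ultimately show ?thesis by (simp add: algebra_simps)
qed




lemma per_xs:
  assumes "finite U" and xs: "xs \<in> permutations_of_set U" and "1 \<le> l" "l \<le> card U"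
    and mono: "monotone_set_fun U v" and sub: "submodular_set_fun U v"
    and AL: "\<forall>L. L \<subseteq> U \<longrightarrow> A L \<subseteq> L \<and> card (A L) \<le> k"
  shows "(\<Sum>i<l. v (alg_set A (swp i (l-1) xs) l (Suc r))) \<ge>
     v (A (prefix_set xs l)) + (real k - 1) * v (alg_set A xs (l+1) r)
       + (real l - real k) * v (alg_set A xs (l+1) (Suc r))"
proof -
  define L where "L = prefix_set xs l"
  define S where "S = alg_set A xs (l+1) r"
  define T where "T = alg_set A xs (l+1) (Suc r)"
  have len: "length xs = card U" using xs by (rule length_finite_permutations_of_set)
  have dist: "distinct xs" and sxs: "set xs = U" using xs by (auto dest: permutations_of_setD)
  have LU: "L \<subseteq> U" unfolding L_def prefix_set_def using sxs set_take_subset[of l xs] by simp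
  have cardL: "card L = l" unfolding L_def prefix_set_def using dist len assms(4)
    by (simp add: distinct_card)
  have ALL: "A L \<subseteq> L" and cAL: "card (A L) \<le> k" using AL LU by auto
  have SU: "S \<subseteq> U" and TU: "T \<subseteq> U" unfolding S_def T_def using alg_subset[of A xs] sxs by blast+
  have ST: "S \<subseteq> T" unfolding S_def T_def by (rule alg_mono)
  have eq: "alg_set A (swp i (l-1) xs) l (Suc r) =
     (if xs!i \<in> A L then insert (xs!i) S else T)" if i: "i < l" for i
  proof -
    let ?ys = "swp i (l-1) xs"
    have n: "?ys ! (l-1) = xs ! i" using i assms(3,4) len by (simp add: swp_nth)
    have p: "prefix_set ?ys l = L" unfolding L_def using i assms(3,4) len by (intro swp_prefix) auto
    have loc: "alg_set A ?ys (l+1) r' = alg_set A xs (l+1) r'" for r'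
    proof (rule alg_local)
      show "length ?ys = length xs" by simp
      show "\<forall>m. l + 1 \<le> m \<longrightarrow> m \<le> length ?ys \<longrightarrow> prefix_set ?ys m = prefix_set xs m"
        using i assms(3,4) len swp_prefix[of i _ "l-1" xs] by simp
      show "\<forall>p. l + 1 \<le> p + 1 \<longrightarrow> p < length ?ys \<longrightarrow> ?ys ! p = xs ! p"
        using i assms(3,4) len by (auto simp: swp_nth)
    qed
    show ?thesis using assms(3,4) len n p loc[of r] loc[of "Suc r"]
      unfolding alg_set.simps(2)[of A ?ys l r] by (simp add: S_def T_def)
  qed
  define g where "g x = (if x \<in> A L then v (insert x S) else v T)" for x
  have "(\<Sum>i<l. v (alg_set A (swp i (l-1) xs) l (Suc r))) = (\<Sum>i<l. g (xs ! i))"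
    using eq by (auto simp: g_def intro!: sum.cong)
  also have "\<dots> = (\<Sum>x\<in>L. g x)"
  proof -
    have "L = (!) xs ` {..<l}" unfolding L_def prefix_set_def
      using nth_image[of l xs] len assms(4) by (simp add: lessThan_atLeast0)
    moreover have "inj_on ((!) xs) {..<l}" using dist len assms(4) by (intro inj_on_nth) auto
    ultimately show ?thesis by (simp add: sum.reindex)
  qed
  also have "\<dots> = (\<Sum>x\<in>A L. v (insert x S)) + (\<Sum>x\<in>L - A L. v T)"
  proof -
    have fL: "finite L" by (rule finite_subset[OF LU assms(1)])
    have "(\<Sum>x\<in>L. g x) = (\<Sum>x\<in>L \<inter> {x. x \<in> A L}. v (insert x S)) + (\<Sum>x\<in>L \<inter> - {x. x \<in> A L}. v T)"
      unfolding g_def by (rule sum.If_cases[OF fL])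
    moreover have "L \<inter> {x. x \<in> A L} = A L" using ALL by auto
    moreover have "L \<inter> - {x. x \<in> A L} = L - A L" by auto
    ultimately show ?thesis by simp
  qed
  also have "\<dots> = (\<Sum>x\<in>A L. v (insert x S)) + (real l - real (card (A L))) * v T"
  proof -
    have fL: "finite L" by (rule finite_subset[OF LU assms(1)])
    have fAL': "finite (A L)" by (rule finite_subset[OF ALL fL])
    have "card (L - A L) = l - card (A L)" using card_Diff_subset[OF fAL' ALL] cardL by simp
    moreover have "card (A L) \<le> l" using card_mono[OF fL ALL] cardL by simp
    ultimately show ?thesis by simp
  qed
  finally have E: "(\<Sum>i<l. v (alg_set A (swp i (l-1) xs) l (Suc r))) =
     (\<Sum>x\<in>A L. v (insert x S)) + (real l - real (card (A L))) * v T" .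
  have fAL: "finite (A L)" by (rule finite_subset[OF subset_trans[OF ALL LU] assms(1)])
  have B: "(\<Sum>x\<in>A L. v (insert x S)) \<ge> v (A L) + (real (card (A L)) - 1) * v S"
    by (rule submod_sum2[OF mono sub fAL subset_trans[OF ALL LU] SU])
  have vST: "v S \<le> v T" by (rule mono[unfolded monotone_set_fun_def, rule_format, OF conjI[OF ST TU]])
  have nn: "(real k - real (card (A L))) * (v T - v S) \<ge> 0" using cAL vST by (simp add: mult_nonneg_nonneg)
  have "(\<Sum>i<l. v (alg_set A (swp i (l-1) xs) l (Suc r))) \<ge>
     v (A L) + (real k - 1) * v S + (real l - real k) * v T"
    using E B nn by (simp add: algebra_simps)
  then show ?thesis by (simp add: L_def S_def T_def)
qed



lemma aux_alg: fixes l N g s t k :: real assumes "l > 0" "N > 0"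
  shows "g / N / l + (k - 1) / l * (s / N) + (1 - k / l) * (t / N) = (g + (k - 1) * s + (l - k) * t) / (l * N)"
  using assms by (simp add: field_simps)

lemma step_E:
  assumes "finite U" and "1 \<le> l" "l \<le> card U"
    and mono: "monotone_set_fun U v" and sub: "submodular_set_fun U v"
    and AL: "\<forall>L. L \<subseteq> U \<longrightarrow> A L \<subseteq> L \<and> card (A L) \<le> k"
  shows "expect_order U (\<lambda>xs. v (alg_set A xs l (Suc r))) \<ge>
     expect_order U (\<lambda>xs. v (A (prefix_set xs l))) / real l
     + (real k - 1) / real l * expect_order U (\<lambda>xs. v (alg_set A xs (l+1) r))
     + (1 - real k / real l) * expect_order U (\<lambda>xs. v (alg_set A xs (l+1) (Suc r)))"
proof -
  let ?P = "permutations_of_set U"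
  define F where "F xs = v (alg_set A xs l (Suc r))" for xs
  define G where "G xs = v (A (prefix_set xs l))" for xs
  define S where "S xs = v (alg_set A xs (l+1) r)" for xs
  define T where "T xs = v (alg_set A xs (l+1) (Suc r))" for xs
  have "real l * (\<Sum>xs\<in>?P. F xs) = (\<Sum>i<l. \<Sum>xs\<in>?P. F xs)" by simp
  also have "\<dots> = (\<Sum>i<l. \<Sum>xs\<in>?P. F (swp i (l-1) xs))"
    using assms(2,3) by (intro sum.cong refl sum_swp[symmetric]) auto
  also have "\<dots> = (\<Sum>xs\<in>?P. \<Sum>i<l. F (swp i (l-1) xs))" by (rule sum.swap)
  also have "\<dots> \<ge> (\<Sum>xs\<in>?P. G xs + (real k - 1) * S xs + (real l - real k) * T xs)"
    unfolding F_def G_def S_def T_def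
    by (intro sum_mono per_xs[OF assms(1) _ assms(2,3) mono sub AL])
  finally have key: "(\<Sum>xs\<in>?P. G xs) + (real k - 1) * (\<Sum>xs\<in>?P. S xs) + (real l - real k) * (\<Sum>xs\<in>?P. T xs)
     \<le> real l * (\<Sum>xs\<in>?P. F xs)"
    by (simp add: sum.distrib sum_distrib_left)
  have Npos: "real (card ?P) > 0" using assms(1) by (simp add: card_gt_0_iff)
  have lpos: "real l > 0" using assms(2) by simp
  have "expect_order U G / real l + (real k - 1) / real l * expect_order U S
        + (1 - real k / real l) * expect_order U T
      = ((\<Sum>xs\<in>?P. G xs) + (real k - 1) * (\<Sum>xs\<in>?P. S xs) + (real l - real k) * (\<Sum>xs\<in>?P. T xs))
        / (real l * real (card ?P))"
    unfolding expect_order_def by (rule aux_alg[OF lpos Npos])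
  also have "\<dots> \<le> (real l * (\<Sum>xs\<in>?P. F xs)) / (real l * real (card ?P))"
    using key Npos lpos by (intro divide_right_mono) auto
  also have "\<dots> = expect_order U F" unfolding expect_order_def using lpos by simp
  finally have fin: "expect_order U G / real l + (real k - 1) / real l * expect_order U S
        + (1 - real k / real l) * expect_order U T \<le> expect_order U F" .
  have Feq: "F = (\<lambda>xs. v (alg_set A xs l (Suc r)))" by (rule ext) (simp only: F_def)
  have Geq: "G = (\<lambda>xs. v (A (prefix_set xs l)))" by (rule ext) (simp only: G_def)
  have Seq: "S = (\<lambda>xs. v (alg_set A xs (l+1) r))" by (rule ext) (simp only: S_def)
  have Teq: "T = (\<lambda>xs. v (alg_set A xs (l+1) (Suc r)))" by (rule ext) (simp only: T_def)
  show ?thesis using fin unfolding Feq Geq Seq Teq .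
qed



definition ee :: "(nat \<Rightarrow> real) \<Rightarrow> nat set \<Rightarrow> nat \<Rightarrow> real" where
  "ee c B r' = (\<Sum>M \<in> {M. M \<subseteq> B \<and> card M = r'}. \<Prod>i\<in>M. c i)"

lemma ee_insert:
  assumes "finite B" "x \<notin> B"
  shows "ee c (insert x B) (Suc r') = ee c B (Suc r') + c x * ee c B r'"
proof -
  let ?X = "{M. M \<subseteq> B \<and> card M = Suc r'}"
  let ?Y = "{M. M \<subseteq> B \<and> card M = r'}"
  have split: "{M. M \<subseteq> insert x B \<and> card M = Suc r'} = ?X \<union> insert x ` ?Y"
  proof (rule set_eqI, rule iffI)
    fix M assume M: "M \<in> {M. M \<subseteq> insert x B \<and> card M = Suc r'}"
    show "M \<in> ?X \<union> insert x ` ?Y"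
    proof (cases "x \<in> M")
      case True
      have fM: "finite M" using M assms(1) finite_subset by auto
      have "M - {x} \<in> ?Y" using M True fM by auto
      moreover have "M = insert x (M - {x})" using True by auto
      ultimately show ?thesis by blast
    next
      case False
      then show ?thesis using M by auto
    qed
  next
    fix M assume "M \<in> ?X \<union> insert x ` ?Y"
    then show "M \<in> {M. M \<subseteq> insert x B \<and> card M = Suc r'}"
    proof
      assume "M \<in> ?X" then show ?thesis by auto
    next
      assume "M \<in> insert x ` ?Y"
      then obtain M' where "M' \<in> ?Y" "M = insert x M'" by auto
      moreover have "finite M'" using \<open>M' \<in> ?Y\<close> assms(1) finite_subset by auto
      moreover have "x \<notin> M'" using \<open>M' \<in> ?Y\<close> assms(2) by auto
      ultimately show ?thesis by auto
    qed
  qed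
  have fX: "finite ?X" by (rule finite_subset[of _ "Pow B"]) (use assms(1) in auto)
  have fY: "finite ?Y" by (rule finite_subset[of _ "Pow B"]) (use assms(1) in auto)
  have disj: "?X \<inter> insert x ` ?Y = {}" using assms(2) by auto
  have inj: "inj_on (insert x) ?Y" using assms(2) unfolding inj_on_def by (metis insertE insert_absorb insert_ident subsetD mem_Collect_eq)
  have "ee c (insert x B) (Suc r') = (\<Sum>M\<in>?X. \<Prod>i\<in>M. c i) + (\<Sum>M\<in>insert x ` ?Y. \<Prod>i\<in>M. c i)"
    unfolding ee_def split using fX fY disj by (intro sum.union_disjoint) auto
  also have "(\<Sum>M\<in>insert x ` ?Y. \<Prod>i\<in>M. c i) = (\<Sum>M\<in>?Y. \<Prod>i\<in>insert x M. c i)"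
    using inj by (simp add: sum.reindex)
  also have "\<dots> = (\<Sum>M\<in>?Y. c x * (\<Prod>i\<in>M. c i))"
  proof (rule sum.cong[OF refl])
    fix M assume "M \<in> ?Y"
    then have "finite M" "x \<notin> M" using assms finite_subset by auto
    then show "(\<Prod>i\<in>insert x M. c i) = c x * (\<Prod>i\<in>M. c i)" by simp
  qed
  finally show ?thesis unfolding ee_def by (simp add: sum_distrib_left)
qed

lemma ee_zero: "finite B \<Longrightarrow> ee c B 0 = 1"
proof -
  assume "finite B"
  then have "{M. M \<subseteq> B \<and> card M = 0} = {{}}" by (auto dest: finite_subset)
  then show ?thesis by (simp add: ee_def)
qed

lemma ee_empty_Suc: "ee c {} (Suc r) = 0"
  by (simp add: ee_def)

definition QQ :: "(nat \<Rightarrow> real) \<Rightarrow> nat set \<Rightarrow> nat \<Rightarrow> real" where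
  "QQ c B r = (\<Sum>r' < r. ee c B r')"

lemma QQ_insert:
  assumes "finite B" "x \<notin> B"
  shows "QQ c (insert x B) (Suc r) = QQ c B (Suc r) + c x * QQ c B r"
proof (induction r)
  case 0
  then show ?case using assms by (simp add: QQ_def ee_zero)
next
  case (Suc r)
  have "QQ c (insert x B) (Suc (Suc r)) = QQ c (insert x B) (Suc r) + ee c (insert x B) (Suc r)"
    by (simp add: QQ_def)
  also have "\<dots> = QQ c B (Suc r) + c x * QQ c B r + ee c B (Suc r) + c x * ee c B r"
    using Suc ee_insert[OF assms] by simp
  also have "\<dots> = QQ c B (Suc (Suc r)) + c x * QQ c B (Suc r)"
    by (simp add: QQ_def algebra_simps)
  finally show ?case .
qed

lemma QQ_empty: "QQ c {} (Suc r) = 1"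
proof (induction r)
  case 0
  then show ?case by (simp add: QQ_def ee_zero)
next
  case (Suc r)
  then show ?case by (simp add: QQ_def ee_empty_Suc)
qed

lemma QQ_nonneg: "(\<And>i. i \<in> B \<Longrightarrow> c i \<ge> 0) \<Longrightarrow> QQ c B r \<ge> 0"
  unfolding QQ_def ee_def
  by (intro sum_nonneg prod_nonneg) auto



definition Rf :: "nat \<Rightarrow> nat \<Rightarrow> (nat \<Rightarrow> real) \<Rightarrow> nat \<Rightarrow> nat \<Rightarrow> real" where
  "Rf k n Gx l r = (\<Sum>j = l..n.
       (\<Prod>i = l..j - 1. (1 - real k / real i)) / real j * Gx j
       * (\<Sum>r' < r. \<Sum>M \<in> {M. M \<subseteq> {l..j - 1} \<and> card M = r'}.
            \<Prod>i\<in>M. (real k - 1) / real i))"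

lemma Rf_QQ: "Rf k n Gx l r = (\<Sum>j = l..n.
       (\<Prod>i = l..j - 1. (1 - real k / real i)) / real j * Gx j * QQ (\<lambda>i. (real k - 1) / real i) {l..j - 1} r)"
  by (simp add: Rf_def QQ_def ee_def)

lemma Rf_nonneg:
  assumes "k \<ge> 1" "k < l" "\<And>j. Gx j \<ge> 0"
  shows "Rf k n Gx l r \<ge> 0"
proof -
  have a: "0 \<le> 1 - real k / real i" if "i \<in> {l..j-1}" for i j
  proof -
    have "real k \<le> real i" "real i > 0" using that assms by auto
    then show ?thesis by (simp add: field_simps)
  qed
  have c: "0 \<le> (real k - 1) / real i" for i using assms by simp
  have a': "real k / real i \<le> 1" if "l \<le> i" for i
    using that assms by (simp add: divide_le_eq_1)
  have k1: "Suc 0 \<le> k" using assms by simp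
  show ?thesis unfolding Rf_QQ
    by (intro sum_nonneg mult_nonneg_nonneg divide_nonneg_nonneg prod_nonneg QQ_nonneg) (auto intro: a a' c k1 assms)
qed

lemma gen_alg: fixes t a j G Q c q :: real
  shows "(t*a)/j*G*(Q + c*q) = t*(a/j*G*Q + c*(a/j*G*q))"
  by (simp add: divide_inverse algebra_simps)

lemma Rf_rec:
  assumes "1 \<le> l" "l \<le> n"
  shows "Rf k n Gx l (Suc r) = Gx l / real l
     + (1 - real k / real l) * (Rf k n Gx (Suc l) (Suc r) + (real k - 1) / real l * Rf k n Gx (Suc l) r)"
proof -
  let ?c = "\<lambda>i. (real k - 1) / real i"
  let ?a = "\<lambda>l j. (\<Prod>i = l..j - 1. (1 - real k / real i))"
  have "Rf k n Gx l (Suc r) = ?a l l / real l * Gx l * QQ ?c {l..l - 1} (Suc r)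
      + (\<Sum>j = Suc l..n. ?a l j / real j * Gx j * QQ ?c {l..j - 1} (Suc r))"
    unfolding Rf_QQ using assms by (simp add: sum.atLeast_Suc_atMost)
  also have "?a l l / real l * Gx l * QQ ?c {l..l - 1} (Suc r) = Gx l / real l"
    using assms by (simp add: QQ_empty)
  also have "(\<Sum>j = Suc l..n. ?a l j / real j * Gx j * QQ ?c {l..j - 1} (Suc r))
     = (\<Sum>j = Suc l..n. (1 - real k / real l) * (?a (Suc l) j / real j * Gx j * QQ ?c {Suc l..j - 1} (Suc r)
         + (real k - 1) / real l * (?a (Suc l) j / real j * Gx j * QQ ?c {Suc l..j - 1} r)))"
  proof (rule sum.cong[OF refl])
    fix j assume j: "j \<in> {Suc l..n}"
    have iv: "{l..j - 1} = insert l {Suc l..j - 1}" using j by auto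
    have nin: "l \<notin> {Suc l..j - 1}" by simp
    have ha: "?a l j = (1 - real k / real l) * ?a (Suc l) j" unfolding iv by (simp add: prod.insert)
    have hq: "QQ ?c {l..j - 1} (Suc r) = QQ ?c {Suc l..j - 1} (Suc r) + ?c l * QQ ?c {Suc l..j - 1} r"
      unfolding iv by (rule QQ_insert) auto
    show "?a l j / real j * Gx j * QQ ?c {l..j - 1} (Suc r) =
       (1 - real k / real l) * (?a (Suc l) j / real j * Gx j * QQ ?c {Suc l..j - 1} (Suc r)
         + (real k - 1) / real l * (?a (Suc l) j / real j * Gx j * QQ ?c {Suc l..j - 1} r))"
      unfolding ha hq by (rule gen_alg)
  qed
  also have "\<dots> = (1 - real k / real l) * (Rf k n Gx (Suc l) (Suc r) + (real k - 1) / real l * Rf k n Gx (Suc l) r)"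
    unfolding Rf_QQ by (simp only: distrib_left sum.distrib sum_distrib_left)
  finally show ?thesis .
qed


theorem mainTheorem7:
  fixes U :: "'a set" and v :: "'a set \<Rightarrow> real" and A :: "'a set \<Rightarrow> 'a set"
    and k l r :: nat
  assumes "finite U"
    and "k \<ge> 1"
    and "\<forall>S. S \<subseteq> U \<longrightarrow> v S \<ge> 0"
    and "monotone_set_fun U v"
    and "submodular_set_fun U v"
    and "\<forall>L. L \<subseteq> U \<longrightarrow> A L \<subseteq> L \<and> card (A L) \<le> k"
    and "k < l" and "l \<le> card U + 1"
    and "r \<le> k"
  shows "expect_order U (\<lambda>xs. v (alg_set A xs l r)) \<ge>
    (\<Sum>j = l..card U.
       (\<Prod>i = l..j - 1. (1 - real k / real i)) / real j
       * expect_order U (\<lambda>xs. v (A (prefix_set xs j)))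
       * (\<Sum>r' < r. \<Sum>M \<in> {M. M \<subseteq> {l..j - 1} \<and> card M = r'}.
            \<Prod>i\<in>M. (real k - 1) / real i))"
proof -
  define n where "n = card U"
  define Gx where "Gx j = expect_order U (\<lambda>xs. v (A (prefix_set xs j)))" for j
  define E where "E m q = expect_order U (\<lambda>xs. v (alg_set A xs m q))" for m q
  have enn: "expect_order U f \<ge> 0" if "\<And>xs. xs \<in> permutations_of_set U \<Longrightarrow> f xs \<ge> 0" for f
    unfolding expect_order_def using that by (intro divide_nonneg_nonneg sum_nonneg) auto
  have Gnn: "Gx j \<ge> 0" for j unfolding Gx_def
  proof (rule enn)
    fix xs assume xs: "xs \<in> permutations_of_set U"
    then have "set xs = U" by (rule permutations_of_setD)
    then have "prefix_set xs j \<subseteq> U" unfolding prefix_set_def using set_take_subset[of j xs] by simp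
    then have "A (prefix_set xs j) \<subseteq> U" using assms(6) by blast
    then show "v (A (prefix_set xs j)) \<ge> 0" using assms(3) by blast
  qed
  have Enn: "E m q \<ge> 0" for m q unfolding E_def
  proof (rule enn)
    fix xs assume xs: "xs \<in> permutations_of_set U"
    then have "set xs = U" by (rule permutations_of_setD)
    then have "alg_set A xs m q \<subseteq> U" using alg_subset[of A xs m q] by simp
    then show "v (alg_set A xs m q) \<ge> 0" using assms(3) by blast
  qed
  have "\<forall>q. Rf k n Gx l q \<le> E l q"
    using assms(8) unfolding n_def[symmetric]
  proof (induction rule: inc_induct)
    case base
    show ?case using Enn by (simp add: Rf_def)
  next
    case (step m)
    have m: "k < m" "1 \<le> m" "m \<le> n" using step(1,2) assms(2,7) by auto
    show ?case
    proof
      fix q show "Rf k n Gx m q \<le> E m q"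
      proof (cases q)
        case 0
        then show ?thesis using Enn[of m q] by (simp add: Rf_def)
      next
        case (Suc r')
        define t where "t = 1 - real k / real m"
        define c where "c = (real k - 1) / real m"
        have t0: "t \<ge> 0" "t \<le> 1" using m unfolding t_def by (auto simp: field_simps)
        have c0: "c \<ge> 0" using assms(2) unfolding c_def by simp
        have R0: "Rf k n Gx (Suc m) r' \<ge> 0" using Rf_nonneg[OF assms(2) _ Gnn] m by simp
        have st: "E m (Suc r') \<ge> Gx m / real m + c * E (Suc m) r' + t * E (Suc m) (Suc r')"
          using step_E[OF assms(1) m(2) m(3)[unfolded n_def] assms(4,5,6), of r']
          unfolding E_def Gx_def c_def t_def by simp
        have IH1: "Rf k n Gx (Suc m) (Suc r') \<le> E (Suc m) (Suc r')" using step(3) by blast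
        have IH0: "Rf k n Gx (Suc m) r' \<le> E (Suc m) r'" using step(3) by blast
        have rec: "Rf k n Gx m (Suc r') = Gx m / real m + t * (Rf k n Gx (Suc m) (Suc r') + c * Rf k n Gx (Suc m) r')"
          unfolding t_def c_def by (rule Rf_rec[OF m(2,3)])
        have "t * (c * Rf k n Gx (Suc m) r') \<le> 1 * (c * Rf k n Gx (Suc m) r')"
          using t0 c0 R0 by (intro mult_right_mono) auto
        moreover have "c * Rf k n Gx (Suc m) r' \<le> c * E (Suc m) r'" using IH0 c0 by (rule mult_left_mono)
        moreover have "t * Rf k n Gx (Suc m) (Suc r') \<le> t * E (Suc m) (Suc r')" using t0 IH1 by (intro mult_left_mono) auto
        ultimately have "Rf k n Gx m (Suc r') \<le> Gx m / real m + c * E (Suc m) r' + t * E (Suc m) (Suc r')"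
          unfolding rec by (simp add: distrib_left)
        then show ?thesis using st Suc by simp
      qed
    qed
  qed
  then have "Rf k n Gx l r \<le> E l r" by blast
  then show ?thesis unfolding Rf_def E_def Gx_def n_def .
qed

end
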